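(* Let $k$ be a field of characteristic $p >0$, let $d_1,\ldots,d_n$ be positive integers, let $A=k[x_1, \ldots, x_n]/(x_1^{d_1}, \ldots, x_n^{d_n})$, and let $t = \sum_{i=1}^n (d_i - 1)$. Let $m$ be a positive integer such that $m+t <2p$. Then for every integer $i$ with $0\le i \le (t-m)/2$, the map $A_i \to A_{i+m}$ given by $f \mapsto f \cdot (x_1+ \dots +x_n)^m$ is injective.
   Context: $A$ is graded by degree, $A=\bigoplus_{i\ge 0}A_i$, with $A_i$ the image of the homogeneous polynomials of degree $i$. *)

theory Defs
  imports Main
begin

text \<open>The truncated polynomial ring A = k[x_0,...,x_(n-1)]/(x_j^(d j)), realised
  concretely: monomials are exponent vectors a :: nat => nat with a j < d j for j < n
  and a j = 0 for j >= n (the standard monomial basis of A); an element of A is its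
  coefficient function, vanishing outside this box.\<close>

definition mon_box :: "nat \<Rightarrow> (nat \<Rightarrow> nat) \<Rightarrow> (nat \<Rightarrow> nat) set" where
  "mon_box n d = {a. (\<forall>j<n. a j < d j) \<and> (\<forall>j\<ge>n. a j = 0)}"

definition trunc_ring :: "nat \<Rightarrow> (nat \<Rightarrow> nat) \<Rightarrow> ((nat \<Rightarrow> nat) \<Rightarrow> 'a::field) set" where
  "trunc_ring n d = {f. \<forall>a. a \<notin> mon_box n d \<longrightarrow> f a = 0}"

definition tmul :: "nat \<Rightarrow> (nat \<Rightarrow> nat) \<Rightarrow> ((nat \<Rightarrow> nat) \<Rightarrow> 'a::field)
    \<Rightarrow> ((nat \<Rightarrow> nat) \<Rightarrow> 'a) \<Rightarrow> ((nat \<Rightarrow> nat) \<Rightarrow> 'a)" where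
  "tmul n d f g = (\<lambda>c. if c \<in> mon_box n d then
       (\<Sum>a\<in>mon_box n d. \<Sum>b\<in>mon_box n d. if (\<lambda>j. a j + b j) = c then f a * g b else 0)
     else 0)"

definition tone :: "nat \<Rightarrow> (nat \<Rightarrow> nat) \<Rightarrow> ((nat \<Rightarrow> nat) \<Rightarrow> 'a::field)" where
  "tone n d = (\<lambda>a. if a = (\<lambda>_. 0) \<and> a \<in> mon_box n d then 1 else 0)"

text \<open>The image of the variable x_j in A (zero if d j = 1).\<close>
definition tvar :: "nat \<Rightarrow> (nat \<Rightarrow> nat) \<Rightarrow> nat \<Rightarrow> ((nat \<Rightarrow> nat) \<Rightarrow> 'a::field)" where
  "tvar n d j = (\<lambda>a. if a = (\<lambda>i. if i = j then 1 else 0) \<and> a \<in> mon_box n d then 1 else 0)"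

definition tpow :: "nat \<Rightarrow> (nat \<Rightarrow> nat) \<Rightarrow> ((nat \<Rightarrow> nat) \<Rightarrow> 'a::field) \<Rightarrow> nat
    \<Rightarrow> ((nat \<Rightarrow> nat) \<Rightarrow> 'a)" where
  "tpow n d f m = (tmul n d f ^^ m) (tone n d)"

definition tlin :: "nat \<Rightarrow> (nat \<Rightarrow> nat) \<Rightarrow> ((nat \<Rightarrow> nat) \<Rightarrow> 'a::field)" where
  "tlin n d = (\<lambda>a. \<Sum>j<n. tvar n d j a)"

definition tgraded :: "nat \<Rightarrow> (nat \<Rightarrow> nat) \<Rightarrow> nat \<Rightarrow> ((nat \<Rightarrow> nat) \<Rightarrow> 'a::field) set" where
  "tgraded n d i = {f \<in> trunc_ring n d. \<forall>a. f a \<noteq> 0 \<longrightarrow> (\<Sum>j<n. a j) = i}"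

end

theory Submission
  imports Defs "HOL-Library.FuncSet"
begin


lemma finite_mon_box: "finite (mon_box n d)"
proof -
  let ?g = "\<lambda>g::nat\<Rightarrow>nat. \<lambda>j. if j < n then g j else 0"
  have "mon_box n d \<subseteq> ?g ` (\<Pi>\<^sub>E j \<in> {..<n}. {..<d j})"
  proof
    fix a assume a: "a \<in> mon_box n d"
    have "restrict a {..<n} \<in> (\<Pi>\<^sub>E j \<in> {..<n}. {..<d j})" using a by (auto simp: mon_box_def)
    moreover have "a = ?g (restrict a {..<n})" using a by (auto simp: mon_box_def fun_eq_iff)
    ultimately show "a \<in> ?g ` (\<Pi>\<^sub>E j \<in> {..<n}. {..<d j})" by blast
  qed
  moreover have "finite (?g ` (\<Pi>\<^sub>E j \<in> {..<n}. {..<d j}))" by (intro finite_imageI finite_PiE) auto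
  ultimately show ?thesis by (rule finite_subset)
qed

lemma mon_box_down:
  assumes "(\<lambda>j. a j + b j) = c" "c \<in> mon_box n d"
  shows "a \<in> mon_box n d" "b \<in> mon_box n d"
proof -
  have c: "\<And>j. c j = a j + b j" using assms(1) by auto
  show "a \<in> mon_box n d" using assms(2) unfolding mon_box_def
    by (smt (verit) c add_eq_0_iff_both_eq_0 le_add1 le_less_trans mem_Collect_eq)
  show "b \<in> mon_box n d" using assms(2) unfolding mon_box_def
    by (smt (verit) c add_eq_0_iff_both_eq_0 le_add2 le_less_trans mem_Collect_eq)
qed

lemma zero_in_box: "\<forall>j<n. d j > 0 \<Longrightarrow> (\<lambda>_. 0) \<in> mon_box n d"
  by (auto simp: mon_box_def)

lemma tmul_tone:
  assumes d: "\<forall>j<n. d j > 0" and f: "f \<in> trunc_ring n d"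
  shows "tmul n d f (tone n d) = f"
proof
  fix c
  show "tmul n d f (tone n d) c = f c"
  proof (cases "c \<in> mon_box n d")
    case False thus ?thesis using f by (simp add: tmul_def trunc_ring_def)
  next
    case True
    have "\<And>a. (\<Sum>b\<in>mon_box n d. if (\<lambda>j. a j + b j) = c then f a * tone n d b else 0)
        = (if a = c then f a else 0)"
    proof -
      fix a
      have "\<And>b. (if (\<lambda>j. a j + b j) = c then f a * tone n d b else 0)
          = (if b = (\<lambda>_. 0) then (if a = c then f a else 0) else 0)"
        by (auto simp: tone_def zero_in_box[OF d])
      thus "(\<Sum>b\<in>mon_box n d. if (\<lambda>j. a j + b j) = c then f a * tone n d b else 0)
        = (if a = c then f a else 0)"
        using zero_in_box[OF d] finite_mon_box by simp
    qed
    thus ?thesis using True finite_mon_box by (simp add: tmul_def)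
  qed
qed



lemma sum_if_distrib: "(if P then (x::'a::field) * (\<Sum>y\<in>S. g y) else 0) = (\<Sum>y\<in>S. if P then x * g y else 0)"
  by (simp add: sum_distrib_left)

lemma tmul_assoc_aux1:
  fixes f g h :: "(nat \<Rightarrow> nat) \<Rightarrow> 'a::field"
  assumes c: "c \<in> mon_box n d"
  shows "(\<Sum>b\<in>mon_box n d. if (\<lambda>j. a j + b j) = c then f a * tmul n d g h b else 0)
    = (\<Sum>y\<in>mon_box n d. \<Sum>z\<in>mon_box n d. if (\<lambda>j. a j + y j + z j) = c then f a * (g y * h z) else 0)"
proof -
  let ?B = "mon_box n d"
  have "(\<Sum>b\<in>?B. if (\<lambda>j. a j + b j) = c then f a * tmul n d g h b else 0)
    = (\<Sum>b\<in>?B. \<Sum>y\<in>?B. \<Sum>z\<in>?B. if b = (\<lambda>j. y j + z j) then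
          (if (\<lambda>j. a j + y j + z j) = c then f a * (g y * h z) else 0) else 0)"
  proof (rule sum.cong[OF refl])
    fix b assume b: "b \<in> ?B"
    show "(if (\<lambda>j. a j + b j) = c then f a * tmul n d g h b else 0) =
      (\<Sum>y\<in>?B. \<Sum>z\<in>?B. if b = (\<lambda>j. y j + z j) then
          (if (\<lambda>j. a j + y j + z j) = c then f a * (g y * h z) else 0) else 0)"
    proof (cases "(\<lambda>j. a j + b j) = c")
      case True thus ?thesis using b by (auto simp: tmul_def sum_distrib_left add.assoc intro!: sum.cong)
    next
      case False
      have "\<And>y z. b = (\<lambda>j. y j + z j) \<Longrightarrow> (\<lambda>j. a j + y j + z j) \<noteq> c"
        using False by (auto simp: add.assoc)
      thus ?thesis using False by (auto intro!: sum.neutral)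
    qed
  qed
  also have "\<dots> = (\<Sum>y\<in>?B. \<Sum>z\<in>?B. \<Sum>b\<in>?B. if b = (\<lambda>j. y j + z j) then
          (if (\<lambda>j. a j + y j + z j) = c then f a * (g y * h z) else 0) else 0)"
    by (subst sum.swap, rule sum.cong[OF refl], subst sum.swap, rule refl)
  also have "\<dots> = (\<Sum>y\<in>?B. \<Sum>z\<in>?B. if (\<lambda>j. a j + y j + z j) = c then f a * (g y * h z) else 0)"
  proof (intro sum.cong refl)
    fix y z
    have "(\<Sum>b\<in>?B. if b = (\<lambda>j. y j + z j) then
          (if (\<lambda>j. a j + y j + z j) = c then f a * (g y * h z) else 0) else 0)
        = (if (\<lambda>j. y j + z j) \<in> ?B then
          (if (\<lambda>j. a j + y j + z j) = c then f a * (g y * h z) else 0) else 0)"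
      using finite_mon_box by (simp add: sum.delta)
    also have "\<dots> = (if (\<lambda>j. a j + y j + z j) = c then f a * (g y * h z) else 0)"
    proof -
      have "(\<lambda>j. a j + y j + z j) = c \<Longrightarrow> (\<lambda>j. y j + z j) \<in> ?B"
        using mon_box_down(2)[of a "\<lambda>j. y j + z j" c n d] c by (simp add: add.assoc)
      thus ?thesis by auto
    qed
    finally show "(\<Sum>b\<in>?B. if b = (\<lambda>j. y j + z j) then
          (if (\<lambda>j. a j + y j + z j) = c then f a * (g y * h z) else 0) else 0)
        = (if (\<lambda>j. a j + y j + z j) = c then f a * (g y * h z) else 0)" .
  qed
  finally show ?thesis .
qed

lemma tmul_assoc_aux2:
  fixes f g h :: "(nat \<Rightarrow> nat) \<Rightarrow> 'a::field"
  assumes c: "c \<in> mon_box n d"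
  shows "(\<Sum>a\<in>mon_box n d. if (\<lambda>j. a j + b j) = c then tmul n d f g a * h b else 0)
    = (\<Sum>x\<in>mon_box n d. \<Sum>y\<in>mon_box n d. if (\<lambda>j. x j + y j + b j) = c then f x * (g y * h b) else 0)"
proof -
  let ?B = "mon_box n d"
  have "(\<Sum>a\<in>?B. if (\<lambda>j. a j + b j) = c then tmul n d f g a * h b else 0)
    = (\<Sum>a\<in>?B. \<Sum>x\<in>?B. \<Sum>y\<in>?B. if a = (\<lambda>j. x j + y j) then
          (if (\<lambda>j. x j + y j + b j) = c then f x * (g y * h b) else 0) else 0)"
  proof (rule sum.cong[OF refl])
    fix a assume a: "a \<in> ?B"
    show "(if (\<lambda>j. a j + b j) = c then tmul n d f g a * h b else 0) =
      (\<Sum>x\<in>?B. \<Sum>y\<in>?B. if a = (\<lambda>j. x j + y j) then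
          (if (\<lambda>j. x j + y j + b j) = c then f x * (g y * h b) else 0) else 0)"
    proof (cases "(\<lambda>j. a j + b j) = c")
      case True thus ?thesis using a by (auto simp: tmul_def sum_distrib_right mult.assoc intro!: sum.cong)
    next
      case False
      have "\<And>x y. a = (\<lambda>j. x j + y j) \<Longrightarrow> (\<lambda>j. x j + y j + b j) \<noteq> c"
        using False by auto
      thus ?thesis using False by (auto intro!: sum.neutral)
    qed
  qed
  also have "\<dots> = (\<Sum>x\<in>?B. \<Sum>y\<in>?B. \<Sum>a\<in>?B. if a = (\<lambda>j. x j + y j) then
          (if (\<lambda>j. x j + y j + b j) = c then f x * (g y * h b) else 0) else 0)"
    by (subst sum.swap, rule sum.cong[OF refl], subst sum.swap, rule refl)
  also have "\<dots> = (\<Sum>x\<in>?B. \<Sum>y\<in>?B. if (\<lambda>j. x j + y j + b j) = c then f x * (g y * h b) else 0)"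
  proof (intro sum.cong refl)
    fix x y
    have "(\<lambda>j. x j + y j + b j) = c \<Longrightarrow> (\<lambda>j. x j + y j) \<in> ?B"
      using mon_box_down(1)[of "\<lambda>j. x j + y j" b c n d] c by simp
    thus "(\<Sum>a\<in>?B. if a = (\<lambda>j. x j + y j) then
          (if (\<lambda>j. x j + y j + b j) = c then f x * (g y * h b) else 0) else 0)
        = (if (\<lambda>j. x j + y j + b j) = c then f x * (g y * h b) else 0)"
      using finite_mon_box by (simp add: sum.delta)
  qed
  finally show ?thesis .
qed

lemma tmul_assoc:
  fixes f g h :: "(nat \<Rightarrow> nat) \<Rightarrow> 'a::field"
  shows "tmul n d f (tmul n d g h) = tmul n d (tmul n d f g) h"
proof
  fix c
  show "tmul n d f (tmul n d g h) c = tmul n d (tmul n d f g) h c"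
  proof (cases "c \<in> mon_box n d")
    case False thus ?thesis by (simp add: tmul_def)
  next
    case True
    let ?B = "mon_box n d"
    have "tmul n d f (tmul n d g h) c = (\<Sum>x\<in>?B. \<Sum>y\<in>?B. \<Sum>z\<in>?B.
        if (\<lambda>j. x j + y j + z j) = c then f x * (g y * h z) else 0)"
      using True by (simp add: tmul_def[of n d f] tmul_assoc_aux1)
    also have "\<dots> = (\<Sum>z\<in>?B. \<Sum>x\<in>?B. \<Sum>y\<in>?B.
        if (\<lambda>j. x j + y j + z j) = c then f x * (g y * h z) else 0)"
      by (subst sum.swap, rule sum.cong[OF refl], subst sum.swap, rule refl)
    also have "\<dots> = (\<Sum>b\<in>?B. \<Sum>a\<in>?B. if (\<lambda>j. a j + b j) = c then tmul n d f g a * h b else 0)"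
      using True by (simp add: tmul_assoc_aux2)
    also have "\<dots> = tmul n d (tmul n d f g) h c"
      using True by (simp add: tmul_def[of n d "tmul n d f g"]) (subst sum.swap, rule refl)
    finally show ?thesis .
  qed
qed



definition Eop :: "nat \<Rightarrow> (nat \<Rightarrow> nat) \<Rightarrow> ((nat \<Rightarrow> nat) \<Rightarrow> 'a::field) \<Rightarrow> ((nat \<Rightarrow> nat) \<Rightarrow> 'a)" where
  "Eop n d f = (\<lambda>c. if c \<in> mon_box n d then (\<Sum>j<n. if 0 < c j then f (c(j := c j - 1)) else 0) else 0)"

lemma add_ej_iff: fixes a c :: "nat \<Rightarrow> nat" shows "((\<lambda>i. a i + (if i = j then 1 else 0)) = c) \<longleftrightarrow> (0 < c j \<and> a = c(j := c j - 1))"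
proof
  assume h: "(\<lambda>i. a i + (if i = j then 1 else 0)) = c"
  hence "\<And>i. c i = a i + (if i = j then 1 else 0)" by auto
  thus "0 < c j \<and> a = c(j := c j - 1)" by (auto simp: fun_eq_iff)
next
  assume "0 < c j \<and> a = c(j := c j - 1)"
  thus "(\<lambda>i. a i + (if i = j then 1 else 0)) = c" by (auto simp: fun_eq_iff)
qed

lemma dec_in_box: "c \<in> mon_box n d \<Longrightarrow> c(j := c j - 1) \<in> mon_box n d"
  unfolding mon_box_def by auto

lemma tmul_tlin: "tmul n d f (tlin n d) = Eop n d f"
proof
  fix c
  show "tmul n d f (tlin n d) c = Eop n d f c"
  proof (cases "c \<in> mon_box n d")
    case False thus ?thesis by (simp add: tmul_def Eop_def)
  next
    case c: True
    let ?B = "mon_box n d"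
    let ?e = "\<lambda>j. (\<lambda>i. if i = j then 1 else (0::nat))"
    have "tmul n d f (tlin n d) c = (\<Sum>a\<in>?B. \<Sum>b\<in>?B. \<Sum>j<n.
        if b = ?e j then (if ?e j \<in> ?B \<and> (\<lambda>i. a i + ?e j i) = c then f a else 0) else 0)"
    proof -
      have "\<And>a b. (if (\<lambda>i. a i + b i) = c then f a * tlin n d b else 0) = (\<Sum>j<n.
        if b = ?e j then (if ?e j \<in> ?B \<and> (\<lambda>i. a i + ?e j i) = c then f a else 0) else 0)"
      proof -
        fix a b
        have "(if (\<lambda>i. a i + b i) = c then f a * tlin n d b else 0) = (\<Sum>j<n.
          if (\<lambda>i. a i + b i) = c then f a * tvar n d j b else 0)"
          by (simp add: tlin_def sum_distrib_left)
        also have "\<dots> = (\<Sum>j<n.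
          if b = ?e j then (if ?e j \<in> ?B \<and> (\<lambda>i. a i + ?e j i) = c then f a else 0) else 0)"
          by (rule sum.cong[OF refl]) (auto simp: tvar_def)
        finally show "(if (\<lambda>i. a i + b i) = c then f a * tlin n d b else 0) = (\<Sum>j<n.
          if b = ?e j then (if ?e j \<in> ?B \<and> (\<lambda>i. a i + ?e j i) = c then f a else 0) else 0)" .
      qed
      thus ?thesis using c by (simp add: tmul_def)
    qed
    also have "\<dots> = (\<Sum>a\<in>?B. \<Sum>j<n. \<Sum>b\<in>?B.
        if b = ?e j then (if ?e j \<in> ?B \<and> (\<lambda>i. a i + ?e j i) = c then f a else 0) else 0)"
      by (rule sum.cong[OF refl], rule sum.swap)
    also have "\<dots> = (\<Sum>a\<in>?B. \<Sum>j<n. if ?e j \<in> ?B \<and> (\<lambda>i. a i + ?e j i) = c then f a else 0)"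
      using finite_mon_box by (simp add: sum.delta) (intro sum.cong refl, auto)
    also have "\<dots> = (\<Sum>j<n. \<Sum>a\<in>?B. if ?e j \<in> ?B \<and> (\<lambda>i. a i + ?e j i) = c then f a else 0)"
      by (rule sum.swap)
    also have "\<dots> = (\<Sum>j<n. if 0 < c j then f (c(j := c j - 1)) else 0)"
    proof (rule sum.cong[OF refl])
      fix j assume j: "j \<in> {..<n}"
      have "(\<Sum>a\<in>?B. if ?e j \<in> ?B \<and> (\<lambda>i. a i + ?e j i) = c then f a else 0)
          = (\<Sum>a\<in>?B. if a = c(j := c j - 1) then (if ?e j \<in> ?B \<and> 0 < c j then f a else 0) else 0)"
        by (rule sum.cong[OF refl]) (auto simp: add_ej_iff)
      also have "\<dots> = (if ?e j \<in> ?B \<and> 0 < c j then f (c(j := c j - 1)) else 0)"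
        using finite_mon_box dec_in_box[OF c] by (simp add: sum.delta)
      also have "\<dots> = (if 0 < c j then f (c(j := c j - 1)) else 0)"
      proof -
        have "0 < c j \<Longrightarrow> ?e j \<in> ?B" using c j by (auto simp: mon_box_def)
        thus ?thesis by auto
      qed
      finally show "(\<Sum>a\<in>?B. if ?e j \<in> ?B \<and> (\<lambda>i. a i + ?e j i) = c then f a else 0)
          = (if 0 < c j then f (c(j := c j - 1)) else 0)" .
    qed
    also have "\<dots> = Eop n d f c" using c by (simp add: Eop_def)
    finally show ?thesis .
  qed
qed

lemma tpow_Suc: "tpow n d L (Suc m) = tmul n d L (tpow n d L m)"
  by (simp add: tpow_def)

lemma Eop_trunc: "Eop n d f \<in> trunc_ring n d"
  by (simp add: Eop_def trunc_ring_def)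

lemma tmul_tpow:
  assumes d: "\<forall>j<n. d j > 0"
  shows "f \<in> trunc_ring n d \<Longrightarrow> tmul n d f (tpow n d (tlin n d) m) = (Eop n d ^^ m) f"
proof (induction m arbitrary: f)
  case 0 thus ?case using tmul_tone[OF d] by (simp add: tpow_def)
next
  case (Suc m)
  have "tmul n d f (tpow n d (tlin n d) (Suc m)) = tmul n d (tmul n d f (tlin n d)) (tpow n d (tlin n d) m)"
    by (simp add: tpow_Suc tmul_assoc)
  also have "\<dots> = (Eop n d ^^ m) (Eop n d f)" using Suc.IH[OF Eop_trunc] by (simp add: tmul_tlin)
  also have "\<dots> = (Eop n d ^^ Suc m) f" by (simp add: funpow_Suc_right del: funpow.simps)
  finally show ?case .
qed



definition Fop :: "nat \<Rightarrow> (nat \<Rightarrow> nat) \<Rightarrow> ((nat \<Rightarrow> nat) \<Rightarrow> 'a::field) \<Rightarrow> ((nat \<Rightarrow> nat) \<Rightarrow> 'a)" where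
  "Fop n d f = (\<lambda>c. if c \<in> mon_box n d then
     (\<Sum>j<n. of_nat ((c j + 1) * (d j - c j - 1)) * f (c(j := c j + 1))) else 0)"

lemma sum_upd_dec:
  fixes c :: "nat \<Rightarrow> nat"
  assumes "j < n" "0 < c j"
  shows "(\<Sum>l<n. (c(j := c j - 1)) l) + 1 = (\<Sum>l<n. c l)"
proof -
  have "(\<Sum>l<n. c l) = c j + (\<Sum>l\<in>{..<n}-{j}. c l)" using assms by (simp add: sum.remove)
  moreover have "(\<Sum>l<n. (c(j := c j - 1)) l) = (c j - 1) + (\<Sum>l\<in>{..<n}-{j}. c l)"
    using assms by (simp add: sum.remove)
  ultimately show ?thesis using assms by simp
qed

lemma sum_upd_inc:
  fixes c :: "nat \<Rightarrow> nat"
  assumes "j < n"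
  shows "(\<Sum>l<n. (c(j := c j + 1)) l) = (\<Sum>l<n. c l) + 1"
proof -
  have "(\<Sum>l<n. c l) = c j + (\<Sum>l\<in>{..<n}-{j}. c l)" using assms by (simp add: sum.remove)
  moreover have "(\<Sum>l<n. (c(j := c j + 1)) l) = (c j + 1) + (\<Sum>l\<in>{..<n}-{j}. c l)"
    using assms by (simp add: sum.remove)
  ultimately show ?thesis by simp
qed

lemma Eop_graded:
  assumes f: "f \<in> tgraded n d i"
  shows "Eop n d f \<in> tgraded n d (Suc i)"
  unfolding tgraded_def
proof (intro CollectI conjI allI impI)
  show "Eop n d f \<in> trunc_ring n d" by (rule Eop_trunc)
  fix c assume h: "Eop n d f c \<noteq> 0"
  hence c: "c \<in> mon_box n d" by (auto simp: Eop_def split: if_splits)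
  have "(\<Sum>j<n. if 0 < c j then f (c(j := c j - 1)) else 0) \<noteq> 0" using h c by (simp add: Eop_def)
  then obtain j where j: "j < n" "(if 0 < c j then f (c(j := c j - 1)) else 0) \<noteq> 0"
    using sum.not_neutral_contains_not_neutral by blast
  hence j2: "0 < c j" "f (c(j := c j - 1)) \<noteq> 0" by (auto split: if_splits)
  hence "(\<Sum>l<n. (c(j := c j - 1)) l) = i" using f by (auto simp: tgraded_def)
  thus "(\<Sum>j<n. c j) = Suc i" using sum_upd_dec[of j n c, OF j(1) j2(1)] by simp
qed

lemma Fop_trunc: "Fop n d f \<in> trunc_ring n d"
  by (simp add: Fop_def trunc_ring_def)

lemma Fop_graded:
  assumes f: "f \<in> tgraded n d i"
  shows "Fop n d f \<in> tgraded n d (i - 1)" "i = 0 \<Longrightarrow> Fop n d f c = 0"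
proof -
  have key: "Fop n d f c \<noteq> 0 \<Longrightarrow> (\<Sum>j<n. c j) + 1 = i" for c
  proof -
    assume h: "Fop n d f c \<noteq> 0"
    hence c: "c \<in> mon_box n d" by (auto simp: Fop_def split: if_splits)
    have "(\<Sum>j<n. of_nat ((c j + 1) * (d j - c j - 1)) * f (c(j := c j + 1))) \<noteq> 0"
      using h c by (simp add: Fop_def)
    then obtain j where j: "j < n" "of_nat ((c j + 1) * (d j - c j - 1)) * f (c(j := c j + 1)) \<noteq> 0"
      using sum.not_neutral_contains_not_neutral by blast
    hence "f (c(j := c j + 1)) \<noteq> 0" by auto
    hence "(\<Sum>l<n. (c(j := c j + 1)) l) = i" using f by (auto simp: tgraded_def)
    thus ?thesis using sum_upd_inc[of j n c, OF j(1)] by simp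
  qed
  show "Fop n d f \<in> tgraded n d (i - 1)" unfolding tgraded_def
    using Fop_trunc key by fastforce
  show "i = 0 \<Longrightarrow> Fop n d f c = 0" using key by fastforce
qed

lemma Eop_lin: "Eop n d (\<lambda>c. u c - s * w c) = (\<lambda>c. Eop n d u c - s * Eop n d w c)"
proof -
  have e: "\<And>P a b. (if P then a - s*b else 0) = (if P then a else 0) - s * (if P then b else (0::'a))" by simp
  show ?thesis by (simp add: Eop_def fun_eq_iff e sum_subtractf sum_distrib_left del: of_nat_diff)
qed

lemma Fop_lin: "Fop n d (\<lambda>c. u c - s * w c) = (\<lambda>c. Fop n d u c - s * Fop n d w c)"
  by (auto simp: Fop_def fun_eq_iff sum_subtractf sum_distrib_left algebra_simps intro!: sum.cong)

lemma Eop_zero: "Eop n d (\<lambda>c. 0) = (\<lambda>c. 0)"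
  by (auto simp: Eop_def fun_eq_iff)

lemma Fop_zero: "Fop n d (\<lambda>c. 0) = (\<lambda>c. 0)"
  by (auto simp: Fop_def fun_eq_iff)

lemma Epow_lin: "(Eop n d ^^ k) (\<lambda>c. u c - s * w c) = (\<lambda>c. (Eop n d ^^ k) u c - s * (Eop n d ^^ k) w c)"
  by (induction k) (simp_all add: Eop_lin)

lemma Epow_zero: "(Eop n d ^^ k) (\<lambda>c. 0) = (\<lambda>c. 0)"
  by (induction k) (simp_all add: Eop_zero)

lemma Epow_graded: "f \<in> tgraded n d i \<Longrightarrow> (Eop n d ^^ k) f \<in> tgraded n d (i + k)"
  by (induction k) (simp_all add: Eop_graded)



lemma diag_coef:
  fixes x dj :: nat
  assumes "x < dj"
  shows "(of_nat (x * (dj - x)) - of_nat ((x + 1) * (dj - x - 1)) :: 'a::field)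
    = of_int (2 * int x + 1 - int dj)"
proof -
  define r where "r = dj - x - 1"
  have r: "dj = x + 1 + r" using assms by (simp add: r_def)
  have "dj - x = r + 1" "dj - x - 1 = r" using r by auto
  hence "(of_nat (x * (dj - x)) - of_nat ((x + 1) * (dj - x - 1)) :: 'a)
      = of_int (int (x * (r + 1)) - int ((x + 1) * r))" by simp
  also have "int (x * (r + 1)) - int ((x + 1) * r) = 2 * int x + 1 - int dj"
    using r by (simp add: algebra_simps)
  finally show ?thesis .
qed

lemma comm:
  fixes f :: "(nat \<Rightarrow> nat) \<Rightarrow> 'a::field"
  assumes f: "f \<in> tgraded n d i" and d: "\<forall>j<n. d j > 0"
  shows "Eop n d (Fop n d f) c - Fop n d (Eop n d f) c
      = of_int (2 * int i - int (\<Sum>j<n. d j - 1)) * f c"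
proof (cases "c \<in> mon_box n d")
  case False
  hence "f c = 0" using f by (auto simp: tgraded_def trunc_ring_def)
  thus ?thesis using False by (simp add: Eop_def Fop_def)
next
  case c: True
  define cf where "cf j (x::nat\<Rightarrow>nat) = (of_nat ((x j + 1) * (d j - x j - 1)) :: 'a)" for j x
  define X where "X j l = (if 0 < c l then cf j (c(l:=c l - 1)) * f ((c(l:=c l - 1))(j := (c(l:=c l-1)) j + 1)) else 0)" for j l
  define Y where "Y j l = cf j c * (if 0 < (c(j:=c j+1)) l then f ((c(j:=c j+1))(l := (c(j:=c j+1)) l - 1)) else 0)" for j l
  have EF: "Eop n d (Fop n d f) c = (\<Sum>j<n. \<Sum>l<n. X j l)"
  proof -
    have "Eop n d (Fop n d f) c = (\<Sum>l<n. if 0 < c l then Fop n d f (c(l := c l - 1)) else 0)"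
      unfolding Eop_def by (simp only: if_P[OF c])
    also have "\<dots> = (\<Sum>l<n. \<Sum>j<n. X j l)"
    proof (rule sum.cong[OF refl])
      fix l
      have m: "c(l := c l - 1) \<in> mon_box n d" by (rule dec_in_box[OF c])
      show "(if 0 < c l then Fop n d f (c(l := c l - 1)) else 0) = (\<Sum>j<n. X j l)"
      proof (cases "0 < c l")
        case True
        have "Fop n d f (c(l := c l - 1)) = (\<Sum>j<n. cf j (c(l:=c l - 1)) *
             f ((c(l:=c l - 1))(j := (c(l:=c l-1)) j + 1)))"
          unfolding Fop_def cf_def by (simp only: if_P[OF m])
        thus ?thesis using True by (simp add: X_def)
      next
        case False thus ?thesis by (simp add: X_def)
      qed
    qed
    finally have "Eop n d (Fop n d f) c = (\<Sum>l<n. \<Sum>j<n. X j l)" .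
    thus ?thesis by (metis (no_types) sum.swap)
  qed
  have FE: "Fop n d (Eop n d f) c = (\<Sum>j<n. \<Sum>l<n. Y j l)"
  proof -
    have "Fop n d (Eop n d f) c = (\<Sum>j<n. cf j c * Eop n d f (c(j := c j + 1)))"
      using c by (simp add: Fop_def cf_def)
    also have "\<dots> = (\<Sum>j<n. \<Sum>l<n. Y j l)"
    proof (rule sum.cong[OF refl])
      fix j assume j: "j \<in> {..<n}"
      show "cf j c * Eop n d f (c(j := c j + 1)) = (\<Sum>l<n. Y j l)"
      proof (cases "c(j := c j + 1) \<in> mon_box n d")
        case True show ?thesis unfolding Eop_def Y_def by (simp only: if_P[OF True] sum_distrib_left)
      next
        case False
        hence "\<not> c j + 1 < d j" using c j by (auto simp: mon_box_def split: if_splits)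
        hence "cf j c = 0" by (simp add: cf_def)
        thus ?thesis by (simp add: Y_def)
      qed
    qed
    finally show ?thesis .
  qed
  have off: "X j l = Y j l" if "l \<noteq> j" for j l
  proof -
    have tw: "c(l := c l - Suc 0, j := Suc (c j)) = c(j := Suc (c j), l := c l - Suc 0)" using that by (rule fun_upd_twist)
    show ?thesis using that unfolding X_def Y_def cf_def by (simp add: tw)
  qed
  have diag: "X j j - Y j j = of_int (2 * int (c j) + 1 - int (d j)) * f c" if j: "j < n" for j
  proof -
    have lt: "c j < d j" using c j by (auto simp: mon_box_def)
    have "X j j = of_nat (c j * (d j - c j)) * f c"
    proof (cases "c j")
      case 0 thus ?thesis by (simp add: X_def)
    next
      case (Suc k)
      have "c(j := c j - 1, j := (c(j := c j - 1)) j + 1) = c" using Suc by auto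
      thus ?thesis using Suc by (simp add: X_def cf_def)
    qed
    moreover have "Y j j = of_nat ((c j + 1) * (d j - c j - 1)) * f c"
      by (simp add: Y_def cf_def)
    ultimately have XY: "X j j - Y j j = (of_nat (c j * (d j - c j)) - of_nat ((c j + 1) * (d j - c j - 1))) * f c"
      by (simp add: algebra_simps)
    have e: "(of_nat (c j * (d j - c j)) - of_nat ((c j + 1) * (d j - c j - 1)) :: 'a)
      = of_int (2 * int (c j) + 1 - int (d j))" by (rule diag_coef[OF lt])
    show ?thesis using XY unfolding e .
  qed
  have split: "(\<Sum>j<n. \<Sum>l<n. Z j l) = (\<Sum>j<n. Z j j + (\<Sum>l\<in>{..<n}-{j}. Z j l))" for Z :: "nat \<Rightarrow> nat \<Rightarrow> 'a"
    by (rule sum.cong[OF refl]) (simp add: sum.remove)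
  have "Eop n d (Fop n d f) c - Fop n d (Eop n d f) c = (\<Sum>j<n. X j j - Y j j)"
  proof -
    have "(\<Sum>j<n. \<Sum>l\<in>{..<n}-{j}. X j l) = (\<Sum>j<n. \<Sum>l\<in>{..<n}-{j}. Y j l)"
      using off by (intro sum.cong refl) auto
    thus ?thesis unfolding EF FE split by (simp add: sum.distrib sum_subtractf)
  qed
  also have "\<dots> = (\<Sum>j<n. of_int (2 * int (c j) + 1 - int (d j)) * f c)"
    using diag by simp
  also have "\<dots> = of_int (\<Sum>j<n. 2 * int (c j) + 1 - int (d j)) * f c"
    by (simp add: sum_distrib_right)
  also have "(\<Sum>j<n. 2 * int (c j) + 1 - int (d j)) = 2 * int (\<Sum>j<n. c j) - int (\<Sum>j<n. d j - 1)"
  proof -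
    have "(\<Sum>j<n. 2 * int (c j) + 1 - int (d j)) = (\<Sum>j<n. 2 * int (c j) - int (d j - 1))"
    proof (rule sum.cong[OF refl])
      fix x assume "x \<in> {..<n}"
      hence "1 \<le> d x" using d by (simp add: Suc_le_eq)
      thus "2 * int (c x) + 1 - int (d x) = 2 * int (c x) - int (d x - 1)" by (simp add: of_nat_diff)
    qed
    also have "\<dots> = 2 * int (\<Sum>j<n. c j) - int (\<Sum>j<n. d j - 1)"
      by (simp add: sum_subtractf sum_distrib_left)
    finally show ?thesis .
  qed
  finally have fin: "Eop n d (Fop n d f) c - Fop n d (Eop n d f) c =
    of_int (2 * int (\<Sum>j<n. c j) - int (\<Sum>j<n. d j - 1)) * f c" .
  show ?thesis
  proof (cases "f c = 0")
    case True thus ?thesis using fin by simp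
  next
    case False
    hence "(\<Sum>j<n. c j) = i" using f by (auto simp: tgraded_def)
    thus ?thesis using fin by simp
  qed
qed



lemma Eop_smult: "Eop n d (\<lambda>c. s * w c) = (\<lambda>c. s * Eop n d w c)"
  by (simp add: Eop_def fun_eq_iff sum_distrib_left if_distrib cong: if_cong)

lemma FE_pow:
  fixes f :: "(nat \<Rightarrow> nat) \<Rightarrow> 'a::field"
  assumes f: "f \<in> tgraded n d i" and d: "\<forall>j<n. d j > 0"
  defines "lam \<equiv> 2 * int i - int (\<Sum>j<n. d j - 1)"
  shows "Fop n d ((Eop n d ^^ Suc k) f) c
     = (Eop n d ^^ Suc k) (Fop n d f) c - of_int (int (Suc k) * (lam + int k)) * (Eop n d ^^ k) f c"
proof (induction k arbitrary: c)
  case 0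
  have "Eop n d (Fop n d f) c - Fop n d (Eop n d f) c = of_int lam * f c"
    using comm[OF f d] by (simp add: lam_def)
  thus ?case by (simp add: algebra_simps)
next
  case (Suc k)
  let ?g = "(Eop n d ^^ Suc k) f"
  let ?s = "of_int (int (Suc k) * (lam + int k)) :: 'a"
  have g: "?g \<in> tgraded n d (i + Suc k)" by (rule Epow_graded[OF f])
  have "Fop n d (Eop n d ?g) c = Eop n d (Fop n d ?g) c - of_int (2 * int (i + Suc k) - int (\<Sum>j<n. d j - 1)) * ?g c"
    using comm[OF g d, of c] by (simp add: algebra_simps)
  moreover have "Fop n d ?g = (\<lambda>c. (Eop n d ^^ Suc k) (Fop n d f) c - ?s * (Eop n d ^^ k) f c)"
    using Suc.IH by (simp add: fun_eq_iff)
  ultimately have "Fop n d (Eop n d ?g) c = (Eop n d ^^ Suc (Suc k)) (Fop n d f) c - ?s * (Eop n d ^^ Suc k) f c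
      - of_int (2 * int (i + Suc k) - int (\<Sum>j<n. d j - 1)) * ?g c"
    by (simp add: Eop_lin)
  also have "\<dots> = (Eop n d ^^ Suc (Suc k)) (Fop n d f) c
      - of_int (int (Suc (Suc k)) * (lam + int (Suc k))) * (Eop n d ^^ Suc k) f c"
  proof -
    have "int (Suc k) * (lam + int k) + (2 * int (i + Suc k) - int (\<Sum>j<n. d j - 1))
        = int (Suc (Suc k)) * (lam + int (Suc k))"
      by (simp add: lam_def algebra_simps)
    hence e: "?s + of_int (2 * int (i + Suc k) - int (\<Sum>j<n. d j - 1)) = (of_int (int (Suc (Suc k)) * (lam + int (Suc k))) :: 'a)"
      by (metis of_int_add)
    show ?thesis by (simp only: diff_diff_eq distrib_right[symmetric] e)
  qed
  finally show ?case by (metis comp_apply funpow.simps(2))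
qed



definition Rf :: "nat \<Rightarrow> (nat \<Rightarrow> nat) \<Rightarrow> ((nat \<Rightarrow> nat) \<Rightarrow> 'a::field) \<Rightarrow> ((nat \<Rightarrow> nat) \<Rightarrow> 'a)" where
  "Rf n d' g = (\<lambda>c. if c \<in> mon_box n d' then g c else 0)"

definition Sf :: "nat \<Rightarrow> (nat \<Rightarrow> nat) \<Rightarrow> nat \<Rightarrow> ((nat \<Rightarrow> nat) \<Rightarrow> 'a::field) \<Rightarrow> ((nat \<Rightarrow> nat) \<Rightarrow> 'a)" where
  "Sf n d j g = (\<lambda>c. if c \<in> mon_box n (d(j := 1)) then g (c(j := d j - 1)) else 0)"

lemma R_Eop:
  assumes sub: "mon_box n d' \<subseteq> mon_box n d"
  shows "Rf n d' (Eop n d g) = Eop n d' (Rf n d' g)"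
proof
  fix c
  show "Rf n d' (Eop n d g) c = Eop n d' (Rf n d' g) c"
  proof (cases "c \<in> mon_box n d'")
    case False thus ?thesis by (simp add: Rf_def Eop_def)
  next
    case True
    hence cd: "c \<in> mon_box n d" using sub by auto
    have "Eop n d' (Rf n d' g) c = (\<Sum>l<n. if 0 < c l then Rf n d' g (c(l := c l - 1)) else 0)"
      by (simp only: Eop_def if_P[OF True])
    also have "\<dots> = (\<Sum>l<n. if 0 < c l then g (c(l := c l - 1)) else 0)"
    proof (rule sum.cong[OF refl])
      fix l
      have "c(l := c l - 1) \<in> mon_box n d'" by (rule dec_in_box[OF True])
      thus "(if 0 < c l then Rf n d' g (c(l := c l - 1)) else 0) = (if 0 < c l then g (c(l := c l - 1)) else 0)"
        by (simp add: Rf_def)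
    qed
    also have "\<dots> = Rf n d' (Eop n d g) c"
      using True cd by (simp add: Rf_def Eop_def)
    finally show ?thesis by simp
  qed
qed

lemma R_Epow:
  assumes sub: "mon_box n d' \<subseteq> mon_box n d"
  shows "Rf n d' ((Eop n d ^^ k) g) = (Eop n d' ^^ k) (Rf n d' g)"
  by (induction k) (simp_all add: R_Eop[OF sub])

lemma Rf_zero: "Rf n d' (\<lambda>c. 0) = (\<lambda>c. 0)" by (simp add: Rf_def fun_eq_iff)

lemma box_dec_sub: "mon_box n (d(j := d j - 1)) \<subseteq> mon_box n d"
  by (auto simp: mon_box_def split: if_splits)

lemma box_dec_out:
  assumes "c \<in> mon_box n d" "c \<notin> mon_box n (d(j := d j - 1))"
  shows "c j = d j - 1"
  using assms by (auto simp: mon_box_def split: if_splits)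

lemma S_Eop:
  assumes j: "j < n" and e: "2 \<le> d j" and g: "\<forall>c. g c \<noteq> 0 \<longrightarrow> c j = d j - 1"
  shows "Sf n d j (Eop n d g) = Eop n (d(j := 1)) (Sf n d j g)"
proof
  fix c
  show "Sf n d j (Eop n d g) c = Eop n (d(j := 1)) (Sf n d j g) c"
  proof (cases "c \<in> mon_box n (d(j := 1))")
    case False thus ?thesis by (simp add: Sf_def Eop_def)
  next
    case cB: True
    have cj: "c j = 0" using cB j by (auto simp: mon_box_def split: if_splits)
    have cu: "c(j := d j - 1) \<in> mon_box n d" using cB j e by (auto simp: mon_box_def split: if_splits)
    have "Sf n d j (Eop n d g) c = (\<Sum>l<n. if 0 < (c(j := d j - 1)) l
        then g ((c(j := d j - 1))(l := (c(j := d j - 1)) l - 1)) else 0)"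
      using cB cu by (simp add: Sf_def Eop_def)
    also have "\<dots> = (\<Sum>l<n. if 0 < c l then Sf n d j g (c(l := c l - 1)) else 0)"
    proof (rule sum.cong[OF refl])
      fix l
      show "(if 0 < (c(j := d j - 1)) l
        then g ((c(j := d j - 1))(l := (c(j := d j - 1)) l - 1)) else 0)
        = (if 0 < c l then Sf n d j g (c(l := c l - 1)) else 0)"
      proof (cases "l = j")
        case True
        have "g (c(j := d j - 1 - 1)) = 0" using g e by fastforce
        thus ?thesis using True cj by simp
      next
        case False
        have tw: "(c(j := d j - 1))(l := c l - 1) = (c(l := c l - 1))(j := d j - 1)"
          using False by (intro fun_upd_twist) auto
        have "0 < c l \<Longrightarrow> c(l := c l - 1) \<in> mon_box n (d(j := 1))" using dec_in_box[OF cB] by simp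
        thus ?thesis using False tw by (simp add: Sf_def)
      qed
    qed
    also have "\<dots> = Eop n (d(j := 1)) (Sf n d j g) c" using cB by (simp add: Eop_def)
    finally show ?thesis .
  qed
qed

lemma S_Epow:
  assumes j: "j < n" and e: "2 \<le> d j" and g: "\<forall>k c. (Eop n d ^^ k) g c \<noteq> 0 \<longrightarrow> c j = d j - 1"
  shows "Sf n d j ((Eop n d ^^ k) g) = (Eop n (d(j := 1)) ^^ k) (Sf n d j g)"
proof (induction k)
  case 0 show ?case by simp
next
  case (Suc k)
  have "Sf n d j ((Eop n d ^^ Suc k) g) = Sf n d j (Eop n d ((Eop n d ^^ k) g))" by simp
  also have "\<dots> = Eop n (d(j := 1)) (Sf n d j ((Eop n d ^^ k) g))"
    using S_Eop[where j=j and n=n and d=d and g="(Eop n d ^^ k) g"] j e g by blast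
  also have "\<dots> = (Eop n (d(j := 1)) ^^ Suc k) (Sf n d j g)" by (simp only: Suc funpow.simps(2) comp_apply)
  finally show ?case .
qed

lemma sum_upd_gen:
  fixes c :: "nat \<Rightarrow> nat"
  assumes "j < n"
  shows "(\<Sum>l<n. (c(j := v)) l) + c j = (\<Sum>l<n. c l) + v"
proof -
  have "(\<Sum>l<n. c l) = c j + (\<Sum>l\<in>{..<n}-{j}. c l)" using assms by (simp add: sum.remove)
  moreover have "(\<Sum>l<n. (c(j := v)) l) = v + (\<Sum>l\<in>{..<n}-{j}. c l)"
    using assms by (simp add: sum.remove)
  ultimately show ?thesis by simp
qed

lemma t_upd:
  fixes d :: "nat \<Rightarrow> nat"
  assumes "j < n" "1 \<le> v" "v \<le> d j"
  shows "(\<Sum>l<n. (d(j := v)) l - 1) + (d j - v) = (\<Sum>l<n. d l - 1)"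
proof -
  have "(\<Sum>l<n. d l - 1) = (d j - 1) + (\<Sum>l\<in>{..<n}-{j}. d l - 1)" using assms by (simp add: sum.remove)
  moreover have "(\<Sum>l<n. (d(j := v)) l - 1) = (v - 1) + (\<Sum>l\<in>{..<n}-{j}. d l - 1)"
    using assms by (simp add: sum.remove)
  ultimately show ?thesis using assms by simp
qed

lemma charnz:
  assumes "CHAR('a::field) = p" "0 < x" "x < p"
  shows "(of_nat x :: 'a) \<noteq> 0"
  using assms by (auto simp: of_nat_eq_0_iff_char_dvd dest: dvd_imp_le)



lemma graded_sub:
  assumes "f \<in> tgraded n d i" "g \<in> tgraded n d i"
  shows "(\<lambda>c. f c - s * g c) \<in> tgraded n d i"
proof -
  have "(f c - s * g c \<noteq> 0) \<Longrightarrow> (f c \<noteq> 0 \<or> g c \<noteq> 0)" for c by auto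
  thus ?thesis using assms unfolding tgraded_def trunc_ring_def by fastforce
qed

lemma main:
  fixes p :: nat
  assumes ch: "CHAR('a::field) = p"
  shows "\<forall>d i m (f :: (nat \<Rightarrow> nat) \<Rightarrow> 'a). (\<forall>j<n. d j > 0) \<longrightarrow> (\<Sum>j<n. d j - 1) = t \<longrightarrow>
     2*i+m \<le> t \<longrightarrow> i+m < p \<longrightarrow> f \<in> tgraded n d i \<longrightarrow> (Eop n d ^^ m) f = (\<lambda>c. 0) \<longrightarrow> f = (\<lambda>c. 0)"
proof (induction t rule: less_induct)
  case (less t)
  have IH: "f = (\<lambda>c. 0)" if "t' < t" "\<forall>j<n. d j > 0" "(\<Sum>j<n. d j - 1) = t'" "2*i+m \<le> t'" "i+m < p"
    "f \<in> tgraded n d i" "(Eop n d ^^ m) f = (\<lambda>c. 0)" for t' d i m and f :: "(nat \<Rightarrow> nat) \<Rightarrow> 'a"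
    using less.IH[OF that(1)] that(2-) by blast
  have nb: "f = (\<lambda>c. 0)"
    if d: "\<forall>j<n. d j > 0" and tt: "(\<Sum>j<n. d j - 1) = t" and lt: "2*i+m < t" and p: "i+m < p"
      and f: "f \<in> tgraded n d i" and E: "(Eop n d ^^ m) f = (\<lambda>c. 0)"
    for d i m and f :: "(nat \<Rightarrow> nat) \<Rightarrow> 'a"
  proof -
    obtain j where j: "j < n" "2 \<le> d j"
    proof (rule ccontr)
      assume "\<not> thesis"
      hence "\<forall>j<n. d j - 1 = 0" using that by fastforce
      hence "(\<Sum>j<n. d j - 1) = 0" by simp
      thus False using tt lt by simp
    qed
    define d' where "d' = d(j := d j - 1)"
    have sub: "mon_box n d' \<subseteq> mon_box n d" unfolding d'_def by (rule box_dec_sub)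
    have d'pos: "\<forall>l<n. d' l > 0" using d j by (auto simp: d'_def)
    have t': "(\<Sum>l<n. d' l - 1) = t - 1"
    proof -
      have a: "1 \<le> d j - 1" using j(2) by simp
      have b: "d j - 1 \<le> d j" by simp
      have h: "(\<Sum>l<n. (d(j := d j - 1)) l - 1) + (d j - (d j - 1)) = (\<Sum>l<n. d l - 1)"
        by (rule t_upd[where j=j and n=n and v="d j - 1" and d=d, OF j(1) a b])
      have "d j - (d j - 1) = 1" using j(2) by simp
      with h tt show ?thesis unfolding d'_def by simp
    qed
    have Rg: "Rf n d' f \<in> tgraded n d' i"
      using f by (auto simp: tgraded_def trunc_ring_def Rf_def)
    have ER: "(Eop n d' ^^ m) (Rf n d' f) = (\<lambda>c. 0)"
      using R_Epow[OF sub, of m f] E by (simp add: Rf_zero)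
    have R0: "Rf n d' f = (\<lambda>c. 0)"
      by (rule IH[of "t - 1" d' i m]) (use lt d'pos t' p Rg ER in auto)
    have supp: "\<forall>k c. (Eop n d ^^ k) f c \<noteq> 0 \<longrightarrow> c j = d j - 1"
    proof (intro allI impI)
      fix k c assume nz: "(Eop n d ^^ k) f c \<noteq> 0"
      have "Rf n d' ((Eop n d ^^ k) f) = (\<lambda>c. 0)"
        using R_Epow[OF sub, of k f] R0 by (simp add: Epow_zero)
      hence "c \<notin> mon_box n d'" using nz by (auto simp: Rf_def fun_eq_iff split: if_splits)
      moreover have "c \<in> mon_box n d"
        using nz Epow_graded[OF f, of k] by (auto simp: tgraded_def trunc_ring_def)
      ultimately show "c j = d j - 1" using box_dec_out unfolding d'_def by blast
    qed
    have supp0: "\<forall>c. f c \<noteq> 0 \<longrightarrow> c j = d j - 1" using supp[rule_format, of 0] by simp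
    show ?thesis
    proof (cases "d j - 1 \<le> i")
      case False
      show ?thesis
      proof (rule ext, rule ccontr)
        fix c assume "f c \<noteq> 0"
        hence "c j = d j - 1" "(\<Sum>l<n. c l) = i" using supp0 f by (auto simp: tgraded_def)
        moreover have "c j \<le> (\<Sum>l<n. c l)" using j by (intro member_le_sum) auto
        ultimately show False using False by simp
      qed
    next
      case True
      define dB where "dB = d(j := 1)"
      define i' where "i' = i - (d j - 1)"
      have dBpos: "\<forall>l<n. dB l > 0" using d by (auto simp: dB_def)
      have tB: "(\<Sum>l<n. dB l - 1) + (d j - 1) = t"
        using t_upd[of j n 1 d] j tt by (simp add: dB_def)
      have SG: "Sf n d j f \<in> tgraded n dB i'"
        unfolding tgraded_def
      proof (intro CollectI conjI allI impI)
        show "Sf n d j f \<in> trunc_ring n dB" by (auto simp: Sf_def trunc_ring_def dB_def)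
        fix c assume nz: "Sf n d j f c \<noteq> 0"
        hence cB: "c \<in> mon_box n dB" and fc: "f (c(j := d j - 1)) \<noteq> 0"
          by (auto simp: Sf_def dB_def split: if_splits)
        have "c j = 0" using cB j by (auto simp: mon_box_def dB_def)
        moreover have "(\<Sum>l<n. (c(j := d j - 1)) l) = i" using fc f by (auto simp: tgraded_def)
        ultimately show "(\<Sum>l<n. c l) = i'"
          using sum_upd_gen[OF j(1), of c "d j - 1"] by (simp add: i'_def)
      qed
      have ES: "(Eop n dB ^^ m) (Sf n d j f) = (\<lambda>c. 0)"
        using S_Epow[OF j supp, of m] E by (simp add: Sf_def dB_def fun_eq_iff)
      have S0: "Sf n d j f = (\<lambda>c. 0)"
        by (rule IH[of "t - (d j - 1)" dB i' m]) (use lt dBpos tB p SG True j ES in \<open>auto simp: i'_def\<close>)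
      show ?thesis
      proof (rule ext, rule ccontr)
        fix c assume nz: "f c \<noteq> 0"
        hence cj: "c j = d j - 1" using supp0 by auto
        have cbox: "c \<in> mon_box n d" using nz f by (auto simp: tgraded_def trunc_ring_def)
        have "c(j := 0) \<in> mon_box n dB" using cbox j by (auto simp: mon_box_def dB_def)
        moreover have "c(j := d j - 1) = c" using cj by (metis fun_upd_triv)
        ultimately have "Sf n d j f (c(j := 0)) = f c" by (simp add: Sf_def dB_def)
        thus False using S0 nz by (metis)
      qed
    qed
  qed
  show ?case
  proof (intro allI impI)
    fix d i m and f :: "(nat \<Rightarrow> nat) \<Rightarrow> 'a"
    assume d: "\<forall>j<n. d j > 0" and tt: "(\<Sum>j<n. d j - 1) = t" and le: "2*i+m \<le> t" and p: "i+m < p"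
      and f: "f \<in> tgraded n d i" and E: "(Eop n d ^^ m) f = (\<lambda>c. 0)"
    show "f = (\<lambda>c. 0)"
    proof (cases "2*i+m < t")
      case True thus ?thesis using nb d tt p f E by blast
    next
      case False
      hence bd: "2*i+m = t" using le by simp
      show ?thesis
      proof (cases m)
        case 0 thus ?thesis using E by simp
      next
        case (Suc m0)
        define lam where "lam = 2 * int i - int (\<Sum>j<n. d j - 1)"
        have lamv: "lam = - int m" using bd tt by (simp add: lam_def)
        have FE: "Fop n d ((Eop n d ^^ Suc k) f) c
          = (Eop n d ^^ Suc k) (Fop n d f) c - of_int (int (Suc k) * (lam + int k)) * (Eop n d ^^ k) f c" for k c
          using FE_pow[OF f d, of k c] by (simp add: lam_def)
        have Ff: "Fop n d f = (\<lambda>c. 0)"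
        proof (cases i)
          case 0 thus ?thesis using Fop_graded(2)[OF f] by (simp add: fun_eq_iff)
        next
          case (Suc i0)
          have "(Eop n d ^^ m) (Fop n d f) = (\<lambda>c. of_int (int (Suc m0) * (lam + int m0)) * (Eop n d ^^ m0) f c)"
          proof
            fix c
            have "Fop n d ((Eop n d ^^ Suc m0) f) c = 0" using E \<open>m = Suc m0\<close> by (simp add: Fop_zero)
            thus "(Eop n d ^^ m) (Fop n d f) c = of_int (int (Suc m0) * (lam + int m0)) * (Eop n d ^^ m0) f c"
              using FE[of m0 c] \<open>m = Suc m0\<close> by simp
          qed
          hence "(Eop n d ^^ Suc m) (Fop n d f) = (\<lambda>c. of_int (int (Suc m0) * (lam + int m0)) * (Eop n d ^^ m) f c)"
            using \<open>m = Suc m0\<close> by (simp add: Eop_smult)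
          hence E2: "(Eop n d ^^ Suc m) (Fop n d f) = (\<lambda>c. 0)" using E by simp
          have Fg: "Fop n d f \<in> tgraded n d i0" using Fop_graded(1)[OF f] Suc by simp
          show ?thesis using nb[OF d tt _ _ Fg E2] bd p Suc by simp
        qed
        have desc: "\<forall>k\<le>m. (Eop n d ^^ (m - k)) f = (\<lambda>c. 0)"
        proof (intro allI)
          fix k show "k \<le> m \<longrightarrow> (Eop n d ^^ (m - k)) f = (\<lambda>c. 0)"
          proof (induction k)
            case 0 thus ?case using E by simp
          next
            case (Suc k)
            show ?case
            proof
              assume km: "Suc k \<le> m"
              define r where "r = m - Suc k"
              have mk: "m - k = Suc r" using km by (simp add: r_def)
              have Er: "(Eop n d ^^ Suc r) f = (\<lambda>c. 0)" using Suc.IH km mk by simp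
              have rm: "r < m" using km by (simp add: r_def)
              have nz: "(of_int (int (Suc r) * (lam + int r)) :: 'a) \<noteq> 0"
              proof -
                have "(of_int (int (Suc r) * (lam + int r)) :: 'a) = - (of_nat (Suc r) * of_nat (m - r))"
                  using rm by (simp add: lamv of_nat_diff algebra_simps)
                moreover have "(of_nat (Suc r) :: 'a) \<noteq> 0" using charnz[OF ch, of "Suc r"] rm p by (simp del: of_nat_Suc)
                moreover have "(of_nat (m - r) :: 'a) \<noteq> 0" using charnz[OF ch, of "m - r"] rm p by simp
                ultimately show ?thesis by simp
              qed
              show "(Eop n d ^^ (m - Suc k)) f = (\<lambda>c. 0)"
              proof
                fix c
                have "Fop n d ((Eop n d ^^ Suc r) f) c = 0" using Er by (simp add: Fop_zero)
                moreover have "(Eop n d ^^ Suc r) (Fop n d f) c = 0" using Ff by (simp add: Epow_zero Eop_zero)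
                ultimately have "of_int (int (Suc r) * (lam + int r)) * (Eop n d ^^ r) f c = 0"
                  using FE[of r c] by simp
                thus "(Eop n d ^^ (m - Suc k)) f c = 0" using nz by (simp add: r_def)
              qed
            qed
          qed
        qed
        thus ?thesis using desc[rule_format, of m] by simp
      qed
    qed
  qed
qed



theorem theorem2p2:
  fixes n p m i :: nat and d :: "nat \<Rightarrow> nat" and t :: nat
  assumes "CHAR('a::field) = p" and "p > 0"
    and "\<forall>j<n. d j > 0"
    and "t = (\<Sum>j<n. d j - 1)"
    and "m > 0" and "m + t < 2 * p"
    and "2 * i + m \<le> t"
  shows "inj_on (\<lambda>f. tmul n d f (tpow n d (tlin n d :: (nat \<Rightarrow> nat) \<Rightarrow> 'a) m))
           (tgraded n d i)"
proof (rule inj_onI)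
  fix f g :: "(nat \<Rightarrow> nat) \<Rightarrow> 'a"
  assume f: "f \<in> tgraded n d i" and g: "g \<in> tgraded n d i"
    and eq: "tmul n d f (tpow n d (tlin n d) m) = tmul n d g (tpow n d (tlin n d) m)"
  have ft: "f \<in> trunc_ring n d" and gt: "g \<in> trunc_ring n d" using f g by (auto simp: tgraded_def)
  have Eeq: "(Eop n d ^^ m) f = (Eop n d ^^ m) g"
    using eq tmul_tpow[OF assms(3) ft, of m] tmul_tpow[OF assms(3) gt, of m] by simp
  define h where "h = (\<lambda>c. f c - 1 * g c)"
  have hg: "h \<in> tgraded n d i" unfolding h_def by (rule graded_sub[OF f g])
  have Eh: "(Eop n d ^^ m) h = (\<lambda>c. 0)" unfolding h_def Epow_lin using Eeq by simp
  have p: "i + m < p" using assms(6) assms(7) by linarith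
  have "h = (\<lambda>c. 0)"
    using main[OF assms(1), of n t, rule_format, of d i m h] assms(3,4,7) p hg Eh by simp
  thus "f = g" unfolding h_def by (simp add: fun_eq_iff)
qed

end
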